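(* Let $f\in C^1([0,1],\mathbb{R})$ satisfy $f(0)=f(1)=0$, $f(s)>0$ for all $s\in(0,1)$, $f'(1)<0$, and suppose there exist $s_0\in(0,1)$, $K\ge 0$, $\alpha>0$ and $r>0$ such that $f(s)\le r\frac{s}{(1+|\ln s|)^\alpha}$ for all $s\in(0,1)$ and $f(s)\ge r\frac{s}{(1+|\ln s|)^\alpha}(1-Ks)$ for all $s\in(0,s_0]$. Let $u_0:\mathbb{R}\to[0,1]$ be uniformly continuous with $u_0>0$ on $\mathbb{R}$, $\liminf_{x\to-\infty}u_0>0$, $\lim_{x\to+\infty}u_0=0$, of class $C^2$ and nonincreasing on $[\xi_0,+\infty)$ for some $\xi_0>0$, and such that $\varphi_0:=-\ln u_0$ satisfies $\varphi_0'=o(\varphi_0^{-\alpha})$ and $\varphi_0''=o(\varphi_0')$ as $x\to+\infty$. Fix $\varepsilon>0$, let $\rho:=r+\frac{\varepsilon}{2}$, and define $$w(t,x):=\exp\Big\{1-\big[(1+\varphi_0(x))^{\alpha+1}-\rho(\alpha+1)t\big]^{\frac{1}{\alpha+1}}\Big\},\qquad x_0(t):=\sup\Big\{x: u_0(x)=\exp\big(1-(\rho(\alpha+1)t+1)^{\frac{1}{\alpha+1}}\big)\Big\}.$$ Let $t^\#>0$ be a time such that $|w_{xx}(t,x)|<\frac{\varepsilon}{2}\frac{w(t,x)}{(1-\ln w(t,x))^\alpha}$ for all $x\ge x_0(t)$, $t\ge t^\#$ (such a time exists). Define $m(t,x):=w(t+t^\#,x)$ for $x\ge x_0(t+t^\#)$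 and $m(t,x):=1$ for $x<x_0(t+t^\#)$. Then $m$ is a supersolution of $u_t=u_{xx}+f(u)$ for all $t>0$ and $x\in\mathbb{R}$, i.e. $m_t-m_{xx}-f(m)\ge0$ on each of the regions $\{x<x_0(t+t^\#)\}$ and $\{x\ge x_0(t+t^\#)\}$.
   Context: $0<m\le 1$; $w$ solves $w_t=\rho\,w/(1-\ln w)^\alpha$ with $w(0,\cdot)=u_0$ and $w(t,x_0(t))=1$. *)

theory Defs
  imports "HOL-Analysis.Analysis" "HOL-Library.Landau_Symbols"
begin

definition has_second_deriv :: "(real \<Rightarrow> real) \<Rightarrow> real \<Rightarrow> real \<Rightarrow> bool" where
  "has_second_deriv g g2 x \<longleftrightarrow>
     (\<exists>d. (\<forall>\<^sub>F y in nhds x. (g has_real_derivative d y) (at y)) \<and>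
          (d has_real_derivative g2) (at x))"

definition supersol_at :: "(real \<Rightarrow> real) \<Rightarrow> (real \<Rightarrow> real \<Rightarrow> real) \<Rightarrow> real \<Rightarrow> real \<Rightarrow> bool" where
  "supersol_at f v t x \<longleftrightarrow>
     (\<exists>vt vxx. ((\<lambda>s. v s x) has_real_derivative vt) (at t) \<and>
              has_second_deriv (\<lambda>y. v t y) vxx x \<and>
              vt - vxx - f (v t x) \<ge> 0)"

end

theory Submission
  imports Defs
begin

theorem lemma3p3:
  fixes f :: "real \<Rightarrow> real" and u0 :: "real \<Rightarrow> real"
    and s0 K \<alpha> r \<xi>0 \<epsilon> \<rho> tsharp :: real
    and \<phi>0 :: "real \<Rightarrow> real" and w m :: "real \<Rightarrow> real \<Rightarrow> real" and x0 :: "real \<Rightarrow> real"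
  assumes f_C1: "\<exists>f'. continuous_on {0..1} f' \<and>
                   (\<forall>s\<in>{0..1}. (f has_real_derivative f' s) (at s within {0..1})) \<and> f' 1 < 0"
    and f0: "f 0 = 0" and f1: "f 1 = 0"
    and fpos: "\<forall>s. 0 < s \<and> s < 1 \<longrightarrow> f s > 0"
    and s0: "0 < s0" "s0 < 1" and K: "K \<ge> 0" and \<alpha>: "\<alpha> > 0" and r: "r > 0"
    and f_upper: "\<forall>s. 0 < s \<and> s < 1 \<longrightarrow> f s \<le> r * s / (1 + \<bar>ln s\<bar>) powr \<alpha>"
    and f_lower: "\<forall>s. 0 < s \<and> s \<le> s0 \<longrightarrow> f s \<ge> r * s / (1 + \<bar>ln s\<bar>) powr \<alpha> * (1 - K * s)"
    and u0_uc: "uniformly_continuous_on UNIV u0"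
    and u0_range: "\<forall>x. 0 < u0 x \<and> u0 x \<le> 1"
    and u0_liminf: "\<exists>c>0. \<forall>\<^sub>F x in at_bot. u0 x \<ge> c"
    and u0_lim: "(u0 \<longlongrightarrow> 0) at_top"
    and \<xi>0: "\<xi>0 > 0"
    and u0_C2: "\<exists>u1 u2. (\<forall>x\<ge>\<xi>0. (u0 has_real_derivative u1 x) (at x within {\<xi>0..}) \<and>
                                (u1 has_real_derivative u2 x) (at x within {\<xi>0..})) \<and>
                      continuous_on {\<xi>0..} u2"
    and u0_mono: "\<forall>x y. \<xi>0 \<le> x \<and> x \<le> y \<longrightarrow> u0 y \<le> u0 x"
    and \<phi>0_def: "\<phi>0 = (\<lambda>x. - ln (u0 x))"
    and \<phi>0_d1: "deriv \<phi>0 \<in> o[at_top](\<lambda>x. \<phi>0 x powr (- \<alpha>))"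
    and \<phi>0_d2: "deriv (deriv \<phi>0) \<in> o[at_top](deriv \<phi>0)"
    and \<epsilon>: "\<epsilon> > 0"
    and \<rho>_def: "\<rho> = r + \<epsilon> / 2"
    and w_def: "w = (\<lambda>t x. exp (1 - ((1 + \<phi>0 x) powr (\<alpha> + 1) - \<rho> * (\<alpha> + 1) * t) powr (1 / (\<alpha> + 1))))"
    and x0_def: "x0 = (\<lambda>t. Sup {x. u0 x = exp (1 - (\<rho> * (\<alpha> + 1) * t + 1) powr (1 / (\<alpha> + 1)))})"
    and tsharp: "tsharp > 0"
    and tsharp_prop: "\<forall>t\<ge>tsharp. \<forall>x\<ge>x0 t. \<exists>wxx. has_second_deriv (\<lambda>y. w t y) wxx x \<and>
                        \<bar>wxx\<bar> < \<epsilon> / 2 * w t x / (1 - ln (w t x)) powr \<alpha>"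
    and m_def: "m = (\<lambda>t x. if x \<ge> x0 (t + tsharp) then w (t + tsharp) x else 1)"
  shows "\<forall>t>0. \<forall>x.
           (x < x0 (t + tsharp) \<longrightarrow> m t x = 1 \<and> supersol_at f (\<lambda>s y. 1) t x) \<and>
           (x \<ge> x0 (t + tsharp) \<longrightarrow> m t x = w (t + tsharp) x \<and>
                                     supersol_at f (\<lambda>s y. w (s + tsharp) y) t x)"
proof (intro allI impI conjI)
  fix t x :: real
  assume t: "t > 0"
  {
    assume "x < x0 (t + tsharp)"
    then show "m t x = 1" using m_def by simp
    show "supersol_at f (\<lambda>s y. 1) t x"
      unfolding supersol_at_def has_second_deriv_def
      by (rule exI[of _ 0], rule exI[of _ 0]) (auto simp: f1 intro!: exI[of _ "\<lambda>_. 0"])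
  }
  assume xge: "x0 (t + tsharp) \<le> x"
  show "m t x = w (t + tsharp) x" using m_def xge by simp
  define a where "a = \<alpha> + 1"
  define T where "T = t + tsharp"
  define Q where "Q = \<rho> * a * T + 1"
  define c where "c = exp (1 - Q powr (1 / a))"
  define S where "S = {x. u0 x = c}"
  have a: "a > 0" using \<alpha> a_def by simp
  have \<rho>: "\<rho> > 0" using \<rho>_def r \<epsilon> by simp
  have T: "T > 0" using t tsharp T_def by simp
  have Q: "Q > 1" using Q_def \<rho> a T by (simp add: mult_pos_pos)
  have c: "c > 0" using c_def by simp
  have x0T: "x0 T = Sup S" using x0_def S_def c_def Q_def a_def by simp
  have cont: "continuous_on UNIV u0" using u0_uc uniformly_continuous_imp_continuous by blast
  have isc: "isCont u0 z" for z using cont by (simp add: continuous_on_eq_continuous_at)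
  obtain N where N: "\<forall>y\<ge>N. u0 y < c"
    using order_tendstoD(2)[OF u0_lim c] by (auto simp: eventually_at_top_linorder)
  have bdd: "bdd_above S"
    unfolding bdd_above_def S_def using N by (metis linorder_not_le mem_Collect_eq order_less_irrefl order_less_le)
  have reach: "\<exists>z\<ge>y. u0 z = c" if "u0 y > c" for y
  proof -
    have "u0 (max N y) \<le> c" using N[rule_format, of "max N y"] by simp
    from IVT2[of u0 "max N y" c y, OF this] that isc
    show ?thesis by fastforce
  qed
  have u0x: "u0 x \<le> c"
  proof (rule ccontr)
    assume "\<not> u0 x \<le> c"
    then obtain z where z: "z \<ge> x" "u0 z = c" using reach by force
    then have "z \<in> S" using S_def by simp
    then have "z \<le> Sup S" using bdd by (simp add: cSup_upper)
    then have "x = z" using z xge x0T T_def by simp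
    then show False using z \<open>\<not> u0 x \<le> c\<close> by simp
  qed
  have ux: "u0 x > 0" using u0_range by simp
  have "\<phi>0 x \<ge> Q powr (1/a) - 1"
    using \<phi>0_def ln_mono[OF u0x ux] c_def by simp
  then have "1 + \<phi>0 x \<ge> Q powr (1/a)" by simp
  then have "(1 + \<phi>0 x) powr a \<ge> (Q powr (1/a)) powr a"
    using a by (intro powr_mono2) auto
  also have "(Q powr (1/a)) powr a = Q" using a Q by (simp add: powr_powr)
  finally have PQ: "(1 + \<phi>0 x) powr a \<ge> Q" .
  define P where "P = (1 + \<phi>0 x) powr a"
  define A where "A = P - \<rho> * a * T"
  have A1: "A \<ge> 1" using PQ P_def A_def Q_def by simp
  define B where "B = A powr (1/a)"
  have B1: "B \<ge> 1" using B_def A1 a by (simp add: ge_one_powr_ge_zero)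
  define W where "W = exp (1 - B)"
  have wTx: "w T x = W" using w_def W_def B_def A_def P_def a_def by simp
  have W: "0 < W" "W \<le> 1" using W_def B1 by auto
  have lnW: "1 - ln W = B" using W_def by simp
  have BA: "B powr \<alpha> = A powr (\<alpha> / a)" using B_def A1 a by (simp add: powr_powr)
  have Bpos: "B powr \<alpha> > 0" using B1 by simp
  have dA: "((\<lambda>s. P - \<rho> * a * (s + tsharp)) has_real_derivative - (\<rho> * a)) (at t)"
    by (auto intro!: derivative_eq_intros)
  have Apos: "P - \<rho> * a * (t + tsharp) > 0" using A1 A_def T_def by simp
  have dB: "((\<lambda>s. (P - \<rho> * a * (s + tsharp)) powr (1/a)) has_real_derivative
      (1/a) * A powr (1/a - 1) * (- (\<rho> * a))) (at t)"
    using DERIV_fun_powr[OF dA Apos, of "1/a"] A_def T_def by simp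
  have dW: "((\<lambda>s. exp (1 - (P - \<rho> * a * (s + tsharp)) powr (1/a))) has_real_derivative
      exp (1 - B) * (- ((1/a) * A powr (1/a - 1) * (- (\<rho> * a))))) (at t)"
    using DERIV_chain2[OF DERIV_exp, OF DERIV_diff[OF DERIV_const dB]] B_def A_def T_def by simp
  have e1: "(\<lambda>s. w (s + tsharp) x) = (\<lambda>s. exp (1 - (P - \<rho> * a * (s + tsharp)) powr (1/a)))"
    using w_def P_def a_def by simp
  define vt where "vt = \<rho> * W * A powr (1/a - 1)"
  have vt_eq: "exp (1 - B) * (- ((1/a) * A powr (1/a - 1) * (- (\<rho> * a)))) = vt"
    using a vt_def W_def by simp
  have "A powr (1/a - 1) = 1 / A powr (\<alpha> / a)"
  proof -
    have "1/a - 1 = - (\<alpha> / a)" using a a_def by (simp add: field_simps)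
    then show ?thesis using A1 by (simp add: powr_minus divide_inverse)
  qed
  then have vt2: "vt = \<rho> * W / B powr \<alpha>" using vt_def BA by simp
  have Tge: "T \<ge> tsharp" using T_def t by simp
  obtain wxx where wxx: "has_second_deriv (\<lambda>y. w T y) wxx x"
      "\<bar>wxx\<bar> < \<epsilon> / 2 * w T x / (1 - ln (w T x)) powr \<alpha>"
    using tsharp_prop Tge xge T_def by blast
  have wxxb: "wxx \<le> \<epsilon> / 2 * W / B powr \<alpha>" using wxx(2) wTx lnW by simp
  have fW: "f W \<le> r * W / B powr \<alpha>"
  proof (cases "W = 1")
    case True then show ?thesis using f1 r by simp
  next
    case False
    then have "W < 1" using W by simp
    then have "f W \<le> r * W / (1 + \<bar>ln W\<bar>) powr \<alpha>" using f_upper W by simp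
    moreover have "1 + \<bar>ln W\<bar> = B" using W lnW by simp
    ultimately show ?thesis by simp
  qed
  have "vt - wxx - f W \<ge> 0"
  proof -
    have "vt - wxx - f W \<ge> \<rho> * W / B powr \<alpha> - \<epsilon> / 2 * W / B powr \<alpha> - r * W / B powr \<alpha>"
      using vt2 wxxb fW by simp
    also have "\<rho> * W / B powr \<alpha> - \<epsilon> / 2 * W / B powr \<alpha> - r * W / B powr \<alpha> = 0"
    proof -
      have "\<rho> * W / B powr \<alpha> - \<epsilon> / 2 * W / B powr \<alpha> - r * W / B powr \<alpha>
          = (\<rho> - \<epsilon> / 2 - r) * W / B powr \<alpha>"
        using Bpos by (simp add: field_simps)
      then show ?thesis using \<rho>_def by simp
    qed
    finally show ?thesis by simp
  qed
  then show "supersol_at f (\<lambda>s y. w (s + tsharp) y) t x"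
    unfolding supersol_at_def
    apply (rule_tac x=vt in exI, rule_tac x=wxx in exI)
    using dW vt_eq e1 wxx(1) wTx T_def by simp
qed

end
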